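(* Let $T\in RB(n)$ with $n\ge 2$. Then $ES_T(i)=FP_T(i)$ holds for all $i\in[n]$ and for all assignments of strictly positive edge lengths to $T$ if and only if $T$ is a semi-balanced tree.
   Context: $RB(n)$ is the set of rooted binary phylogenetic trees with leaf set $[n]$ (every non-leaf vertex has out-degree 2). Each edge has length $l(e)>0$, and $n(e)$ is the number of leaves below $e$. $FP_T(i)=\sum_{e\in P(T;\rho,i)} l(e)/n(e)$ and $ES_T(i)=\sum_{e\in P(T;\rho,i)} l(e)/2^{k(e,i)}$, where $P(T;\rho,i)$ is the path from the root $\rho$ to leaf $i$ and $k(e,i)$ is the number of edges strictly between $e$ and $i$ on it. The fully balanced tree of height $h\ge 0$ is the rooted binary tree with $2^h$ leaves in which every leaf is separated from the root by exactly $h$ edges (for $h=0$ it is a single leaf). A rooted binary tree $T$ is semi-balanced if the two maximal pending subtrees rooted at the two children of the root are fully balanced trees of heights $h'$ and $h''$, not necessarily equal. *)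

theory Defs
  imports Complex_Main
begin

text \<open>A vertex is addressed by its
position (path from the root, False = left child, True = right child).
Each non-root vertex v corresponds to the edge from its parent to v;
so the edge set of a tree is its set of nonempty positions, and an
edge-length assignment is a function on positions.\<close>

datatype ltree = Leaf nat | Node ltree ltree

fun leaves :: "ltree \<Rightarrow> nat list" where
  "leaves (Leaf a) = [a]"
| "leaves (Node l r) = leaves l @ leaves r"

definition is_RB :: "nat \<Rightarrow> ltree \<Rightarrow> bool" where
  "is_RB n T \<longleftrightarrow> distinct (leaves T) \<and> set (leaves T) = {1..n}"

fun poss :: "ltree \<Rightarrow> bool list set" where
  "poss (Leaf a) = {[]}"
| "poss (Node l r) = {[]} \<union> Cons False ` poss l \<union> Cons True ` poss r"

fun subt :: "ltree \<Rightarrow> bool list \<Rightarrow> ltree" where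
  "subt t [] = t"
| "subt (Node l r) (False # p) = subt l p"
| "subt (Node l r) (True # p) = subt r p"
| "subt (Leaf a) (_ # p) = Leaf a"

definition edges :: "ltree \<Rightarrow> bool list set" where
  "edges T = poss T - {[]}"

definition nbelow :: "ltree \<Rightarrow> bool list \<Rightarrow> nat" where
  "nbelow T e = length (leaves (subt T e))"

definition path_edges :: "ltree \<Rightarrow> nat \<Rightarrow> bool list set" where
  "path_edges T i = {e \<in> edges T. i \<in> set (leaves (subt T e))}"

fun ldepth :: "nat \<Rightarrow> ltree \<Rightarrow> nat" where
  "ldepth i (Leaf a) = 0"
| "ldepth i (Node l r) = Suc (if i \<in> set (leaves l) then ldepth i l else ldepth i r)"

text \<open>k(e,i): number of edges strictly between e and leaf i = depth of i below
the lower endpoint of e.\<close>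
definition kbetween :: "ltree \<Rightarrow> bool list \<Rightarrow> nat \<Rightarrow> nat" where
  "kbetween T e i = ldepth i (subt T e)"

definition FP :: "ltree \<Rightarrow> (bool list \<Rightarrow> real) \<Rightarrow> nat \<Rightarrow> real" where
  "FP T l i = (\<Sum>e\<in>path_edges T i. l e / real (nbelow T e))"

definition ES :: "ltree \<Rightarrow> (bool list \<Rightarrow> real) \<Rightarrow> nat \<Rightarrow> real" where
  "ES T l i = (\<Sum>e\<in>path_edges T i. l e / 2 ^ kbetween T e i)"

fun fully_balanced :: "nat \<Rightarrow> ltree \<Rightarrow> bool" where
  "fully_balanced 0 (Leaf a) = True"
| "fully_balanced (Suc h) (Node l r) = (fully_balanced h l \<and> fully_balanced h r)"
| "fully_balanced _ _ = False"

definition semi_balanced :: "ltree \<Rightarrow> bool" where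
  "semi_balanced T \<longleftrightarrow> (\<exists>l r h1 h2. T = Node l r \<and> fully_balanced h1 l \<and> fully_balanced h2 r)"

end

theory Submission
  imports Defs
begin

lemma leaves_ne: "leaves t \<noteq> []"
  by (induction t) auto

lemma nil_poss: "[] \<in> poss t"
  by (cases t) auto

lemma finite_poss: "finite (poss t)"
  by (induction t) auto

lemma fb_props: "fully_balanced h S \<Longrightarrow> length (leaves S) = 2^h \<and> (\<forall>i\<in>set (leaves S). ldepth i S = h)"
  by (induction h S rule: fully_balanced.induct) auto

lemma fb_subt: "fully_balanced h S \<Longrightarrow> p \<in> poss S \<Longrightarrow> \<exists>h'. fully_balanced h' (subt S p)"
proof (induction h S arbitrary: p rule: fully_balanced.induct)
  case (1 a) then show ?case by (auto intro: exI[of _ 0])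
next
  case (2 h l r) then show ?case by (auto intro: exI[of _ "Suc h"])
qed auto

lemma depth_fb: "distinct (leaves S) \<Longrightarrow> (\<forall>i\<in>set (leaves S). ldepth i S = h) \<Longrightarrow> fully_balanced h S"
proof (induction S arbitrary: h)
  case (Leaf a) then show ?case by (cases h) auto
next
  case (Node l r)
  obtain i where i: "i \<in> set (leaves l)" using leaves_ne[of l] by (cases "leaves l") auto
  then have "h = Suc (ldepth i l)" using Node.prems by auto
  then obtain h' where h: "h = Suc h'" by blast
  have "\<forall>i\<in>set (leaves l). ldepth i l = h'" using Node.prems h by auto
  moreover have "\<forall>i\<in>set (leaves r). ldepth i r = h'"
  proof
    fix j assume j: "j \<in> set (leaves r)"
    then have "j \<notin> set (leaves l)" using Node.prems(1) by auto
    then show "ldepth j r = h'" using Node.prems(2) j h by auto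
  qed
  ultimately show ?case using Node h by auto
qed

lemma coeff_extract:
  fixes c d :: "'a \<Rightarrow> real"
  assumes fin: "finite A" and e0: "e0 \<in> A"
    and H: "\<And>l. (\<forall>e. 0 < l e) \<Longrightarrow> (\<Sum>e\<in>A. l e * c e) = (\<Sum>e\<in>A. l e * d e)"
  shows "c e0 = d e0"
proof -
  define l1 :: "'a \<Rightarrow> real" where "l1 = (\<lambda>_. 1)"
  define l2 :: "'a \<Rightarrow> real" where "l2 = (\<lambda>e. if e = e0 then 2 else 1)"
  have key: "\<And>f. (\<Sum>e\<in>A. l2 e * f e) - (\<Sum>e\<in>A. l1 e * f e) = f e0"
  proof -
    fix f :: "'a \<Rightarrow> real"
    have "(\<Sum>e\<in>A. l2 e * f e) - (\<Sum>e\<in>A. l1 e * f e) = (\<Sum>e\<in>A. (l2 e - l1 e) * f e)"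
      by (simp add: sum_subtractf left_diff_distrib)
    also have "\<dots> = (\<Sum>e\<in>A. if e = e0 then f e else 0)"
      by (rule sum.cong) (auto simp: l1_def l2_def)
    also have "\<dots> = f e0" using fin e0 by simp
    finally show "(\<Sum>e\<in>A. l2 e * f e) - (\<Sum>e\<in>A. l1 e * f e) = f e0" .
  qed
  have "(\<Sum>e\<in>A. l1 e * c e) = (\<Sum>e\<in>A. l1 e * d e)" by (rule H) (simp add: l1_def)
  moreover have "(\<Sum>e\<in>A. l2 e * c e) = (\<Sum>e\<in>A. l2 e * d e)" by (rule H) (simp add: l2_def)
  ultimately show ?thesis using key[of c] key[of d] by simp
qed

lemma child_fb:
  assumes H: "\<forall>l :: bool list \<Rightarrow> real. (\<forall>e\<in>edges T. 0 < l e) \<longrightarrow>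
            (\<forall>i\<in>{1..n}. ES T l i = FP T l i)"
    and RB: "is_RB n T" and T: "T = Node L R"
    and ch: "(b = False \<and> S = L) \<or> (b = True \<and> S = R)"
  shows "\<exists>h. fully_balanced h S"
proof -
  have subS: "subt T [b] = S" using ch T by auto
  have lsub: "set (leaves S) \<subseteq> {1..n}" using RB ch T by (auto simp: is_RB_def)
  have dS: "distinct (leaves S)" using RB ch T by (auto simp: is_RB_def)
  have ebE: "[b] \<in> edges T" using ch T by (auto simp: edges_def nil_poss)
  have eq: "2 ^ ldepth i S = length (leaves S)" if i: "i \<in> set (leaves S)" for i
  proof -
    let ?A = "path_edges T i"
    have fin: "finite ?A" unfolding path_edges_def edges_def using finite_poss by auto
    have inA: "[b] \<in> ?A" using ebE subS i by (auto simp: path_edges_def)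
    have "(\<lambda>e. 1 / (2::real) ^ kbetween T e i) [b] = (\<lambda>e. 1 / real (nbelow T e)) [b]"
    proof (rule coeff_extract[OF fin inA])
      fix l :: "bool list \<Rightarrow> real" assume "\<forall>e. 0 < l e"
      then have "ES T l i = FP T l i" using H i lsub by auto
      then show "(\<Sum>e\<in>?A. l e * (1 / 2 ^ kbetween T e i)) = (\<Sum>e\<in>?A. l e * (1 / real (nbelow T e)))"
        by (simp add: ES_def FP_def)
    qed
    then have "(2::real) ^ ldepth i S = real (length (leaves S))"
      using subS by (simp add: kbetween_def nbelow_def)
    then show ?thesis by (metis of_nat_eq_iff of_nat_numeral of_nat_power)
  qed
  obtain i0 where i0: "i0 \<in> set (leaves S)" using leaves_ne[of S] by (cases "leaves S") auto
  have "\<forall>i\<in>set (leaves S). ldepth i S = ldepth i0 S"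
  proof
    fix i assume "i \<in> set (leaves S)"
    then have "(2::nat) ^ ldepth i S = 2 ^ ldepth i0 S" using eq i0 by simp
    then show "ldepth i S = ldepth i0 S" by simp
  qed
  then show ?thesis using depth_fb[OF dS] by blast
qed

theorem theorem4:
  fixes n :: nat and T :: ltree
  assumes "n \<ge> 2" and "is_RB n T"
  shows "(\<forall>l :: bool list \<Rightarrow> real. (\<forall>e\<in>edges T. 0 < l e) \<longrightarrow>
            (\<forall>i\<in>{1..n}. ES T l i = FP T l i)) \<longleftrightarrow> semi_balanced T"
proof
  assume H: "\<forall>l :: bool list \<Rightarrow> real. (\<forall>e\<in>edges T. 0 < l e) \<longrightarrow>
            (\<forall>i\<in>{1..n}. ES T l i = FP T l i)"
  obtain L R where T: "T = Node L R"
  proof (cases T)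
    case (Leaf a)
    then have "{1..n} = {a}" using assms(2) by (simp add: is_RB_def)
    then have "card {1..n} = 1" by simp
    then show ?thesis using assms(1) by simp
  qed
  obtain h1 where "fully_balanced h1 L" using child_fb[OF H assms(2) T, of False L] by auto
  moreover obtain h2 where "fully_balanced h2 R" using child_fb[OF H assms(2) T, of True R] by auto
  ultimately show "semi_balanced T" using T by (auto simp: semi_balanced_def)
next
  assume "semi_balanced T"
  then obtain L R h1 h2 where T: "T = Node L R" and fb1: "fully_balanced h1 L" and fb2: "fully_balanced h2 R"
    by (auto simp: semi_balanced_def)
  have fbe: "\<exists>h. fully_balanced h (subt T e)" if "e \<in> edges T" for e
    using that fb_subt[OF fb1] fb_subt[OF fb2] T by (auto simp: edges_def)
  show "\<forall>l :: bool list \<Rightarrow> real. (\<forall>e\<in>edges T. 0 < l e) \<longrightarrow>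
            (\<forall>i\<in>{1..n}. ES T l i = FP T l i)"
  proof (intro allI impI ballI)
    fix l :: "bool list \<Rightarrow> real" and i
    show "ES T l i = FP T l i" unfolding ES_def FP_def
    proof (rule sum.cong)
      fix e assume e: "e \<in> path_edges T i"
      then obtain h where h: "fully_balanced h (subt T e)" using fbe by (auto simp: path_edges_def)
      have "i \<in> set (leaves (subt T e))" using e by (auto simp: path_edges_def)
      then have "kbetween T e i = h" "nbelow T e = 2^h" using fb_props[OF h]
        by (auto simp: kbetween_def nbelow_def)
      then show "l e / 2 ^ kbetween T e i = l e / real (nbelow T e)" by simp
    qed simp
  qed
qed

end
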